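(* Let $n\in\mathbb N$ and $0<\varepsilon,\gamma<1$. Let $H$ be a $3$-graph of order $n$ with $\delta_2(H)\ge(1/2-\gamma)n$. Let $v\in V(H)$ and suppose there are at least $\varepsilon n^3$ edges $e\in E(H)$ such that $v\in L(e)$. Then $|\tilde N_{1,\gamma\varepsilon}(v)|\ge(1/4-3\gamma)n$.
   Context: $\delta_2(H)$ is the minimum over pairs of distinct vertices of the number of edges containing the pair. $K_4^-$ is the $3$-graph with $4$ vertices and $3$ edges. For a $3$-set $T$, $L(T)$ is the set of vertices $u$ such that $H[T\cup\{u\}]$ contains a copy of $K_4^-$. For $c\in\mathbb N$, a set $S$ is an $(x,y)$-connector of length $c$ if $S\cap\{x,y\}=\emptyset$, $|S|=4c-1$, and both $H[S\cup\{x\}]$, $H[S\cup\{y\}]$ contain $K_4^-$-factors (vertex-disjoint copies covering all vertices). $x,y$ are $(c,\eta)$-close if there are at least $\eta n^{4c-1}$ $(x,y)$-connectors of length $c$ in $H$. $\tilde N_{c,\eta}(x)$ is the set of vertices $(c,\eta)$-close to $x$. *)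

theory Defs
  imports Main Complex_Main
begin

definition three_graph :: "'a set \<Rightarrow> 'a set set \<Rightarrow> bool" where
  "three_graph V E \<longleftrightarrow> finite V \<and> (\<forall>e\<in>E. e \<subseteq> V \<and> card e = 3)"

definition codeg :: "'a set set \<Rightarrow> 'a \<Rightarrow> 'a \<Rightarrow> nat" where
  "codeg E x y = card {e \<in> E. x \<in> e \<and> y \<in> e}"

definition min_codeg_ge :: "'a set \<Rightarrow> 'a set set \<Rightarrow> real \<Rightarrow> bool" where
  "min_codeg_ge V E d \<longleftrightarrow> (\<forall>x\<in>V. \<forall>y\<in>V. x \<noteq> y \<longrightarrow> real (codeg E x y) \<ge> d)"

definition is_K4minus :: "'a set set \<Rightarrow> 'a set \<Rightarrow> bool" where
  "is_K4minus E Q \<longleftrightarrow> card Q = 4 \<and> card {e \<in> E. e \<subseteq> Q} \<ge> 3"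

definition contains_K4minus :: "'a set set \<Rightarrow> 'a set \<Rightarrow> bool" where
  "contains_K4minus E X \<longleftrightarrow> (\<exists>Q. Q \<subseteq> X \<and> is_K4minus E Q)"

definition has_K4minus_factor :: "'a set set \<Rightarrow> 'a set \<Rightarrow> bool" where
  "has_K4minus_factor E X \<longleftrightarrow>
     (\<exists>P. finite P \<and> \<Union>P = X \<and> (\<forall>Q\<in>P. is_K4minus E Q)
          \<and> (\<forall>Q1\<in>P. \<forall>Q2\<in>P. Q1 \<noteq> Q2 \<longrightarrow> Q1 \<inter> Q2 = {}))"

definition Lset :: "'a set \<Rightarrow> 'a set set \<Rightarrow> 'a set \<Rightarrow> 'a set" where
  "Lset V E T = {u \<in> V. contains_K4minus E (T \<union> {u})}"

definition connector :: "'a set \<Rightarrow> 'a set set \<Rightarrow> nat \<Rightarrow> 'a \<Rightarrow> 'a \<Rightarrow> 'a set \<Rightarrow> bool" where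
  "connector V E c x y S \<longleftrightarrow> S \<subseteq> V \<and> x \<notin> S \<and> y \<notin> S \<and> card S = 4 * c - 1
     \<and> has_K4minus_factor E (S \<union> {x}) \<and> has_K4minus_factor E (S \<union> {y})"

definition close :: "'a set \<Rightarrow> 'a set set \<Rightarrow> nat \<Rightarrow> real \<Rightarrow> 'a \<Rightarrow> 'a \<Rightarrow> bool" where
  "close V E c \<eta> x y \<longleftrightarrow>
     real (card {S. connector V E c x y S}) \<ge> \<eta> * real (card V) ^ (4 * c - 1)"

definition close_nbhd :: "'a set \<Rightarrow> 'a set set \<Rightarrow> nat \<Rightarrow> real \<Rightarrow> 'a \<Rightarrow> 'a set" where
  "close_nbhd V E c \<eta> x = {y \<in> V. close V E c \<eta> x y}"

end

theory Submission
  imports Defs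
begin

lemma card_ge3: "finite S \<Longrightarrow> {x,y,z} \<subseteq> S \<Longrightarrow> x\<noteq>y \<Longrightarrow> y\<noteq>z \<Longrightarrow> x\<noteq>z \<Longrightarrow> card S \<ge> 3"
proof -
  assume "finite S" "{x,y,z} \<subseteq> S" "x\<noteq>y" "y\<noteq>z" "x\<noteq>z"
  hence "card {x,y,z} \<le> card S" by (intro card_mono)
  moreover have "card {x,y,z} = 3" using \<open>x\<noteq>y\<close> \<open>y\<noteq>z\<close> \<open>x\<noteq>z\<close> by simp
  ultimately show ?thesis by simp
qed

lemma K4_of_L:
  assumes "finite e" "card e = 3" "v \<in> Lset V E e"
  shows "v \<notin> e" "v \<in> V" "is_K4minus E (e \<union> {v})"
proof -
  from assms(3) obtain Q where Q: "Q \<subseteq> e \<union> {v}" "is_K4minus E Q"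
    unfolding Lset_def contains_K4minus_def by auto
  have fin: "finite (e \<union> {v})" using assms by simp
  have c4: "card Q = 4" using Q is_K4minus_def by auto
  have "card (e \<union> {v}) \<le> 4" using assms by (simp add: card_insert_if)
  hence eq: "Q = e \<union> {v}" using card_mono[OF fin Q(1)] c4 card_subset_eq[OF fin Q(1)] by simp
  show "v \<notin> e" proof
    assume "v \<in> e" hence "e \<union> {v} = e" by auto
    thus False using eq c4 assms by simp
  qed
  show "v \<in> V" using assms(3) unfolding Lset_def by auto
  show "is_K4minus E (e \<union> {v})" using eq Q by simp
qed

lemma factor_single: "is_K4minus E Q \<Longrightarrow> has_K4minus_factor E Q"
  unfolding has_K4minus_factor_def by (rule exI[of _ "{Q}"]) auto

lemma edge_pair:
  assumes "card f = 3" "a \<in> f" "b \<in> f" "a \<noteq> b"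
  shows "\<exists>u. f = {a,b,u} \<and> u \<notin> {a,b}"
proof -
  have fin: "finite f" using assms(1) card.infinite by fastforce
  have "card (f - {a,b}) = 1" using assms fin by (simp add: card_Diff_subset)
  then obtain u where u: "f - {a,b} = {u}" by (auto simp: card_1_singleton_iff)
  hence "f = {a,b,u}" using assms by auto
  thus ?thesis using u by auto
qed

lemma L_intro:
  assumes "{a,b,c} \<in> E" "u \<in> V" "distinct [a,b,c,u]"
    and "({a,b,u} \<in> E \<and> {a,c,u} \<in> E) \<or> ({a,b,u} \<in> E \<and> {b,c,u} \<in> E) \<or> ({a,c,u} \<in> E \<and> {b,c,u} \<in> E)"
    and "finite E"
  shows "u \<in> Lset V E {a,b,c}"
proof -
  let ?Q = "{a,b,c} \<union> {u}"
  have "card ?Q = 4" using assms(3) by (auto simp: card_insert_if)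
  moreover have "card {f \<in> E. f \<subseteq> ?Q} \<ge> 3"
    using assms(4)
  proof (elim disjE conjE)
    assume "{a,b,u} \<in> E" "{a,c,u} \<in> E"
    thus ?thesis using assms by (intro card_ge3[of _ "{a,b,c}" "{a,b,u}" "{a,c,u}"]) auto
  next
    assume "{a,b,u} \<in> E" "{b,c,u} \<in> E"
    thus ?thesis using assms by (intro card_ge3[of _ "{a,b,c}" "{a,b,u}" "{b,c,u}"]) auto
  next
    assume "{a,c,u} \<in> E" "{b,c,u} \<in> E"
    thus ?thesis using assms by (intro card_ge3[of _ "{a,b,c}" "{a,c,u}" "{b,c,u}"]) auto
  qed
  ultimately show ?thesis using assms unfolding Lset_def contains_K4minus_def is_K4minus_def by blast
qed

lemma finE: "three_graph V E \<Longrightarrow> finite E"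
  unfolding three_graph_def by (meson Pow_iff finite_Pow_iff finite_subset subsetI)

lemma pair_count:
  assumes tg: "three_graph V E" and md: "min_codeg_ge V E d" and e: "{p,q,r} \<in> E"
    and dist: "p \<noteq> q" "p \<noteq> r" "q \<noteq> r"
  shows "real (card {u \<in> V - {p,q,r}. {p,q,u} \<in> E}) \<ge> d - 1"
proof -
  have fV: "finite V" using tg by (auto simp: three_graph_def)
  have sub: "{p,q,r} \<subseteq> V" using tg e by (auto simp: three_graph_def)
  hence cd: "real (codeg E p q) \<ge> d" using md dist unfolding min_codeg_ge_def by auto
  have sb: "{f \<in> E. p \<in> f \<and> q \<in> f} \<subseteq> (\<lambda>u. {p,q,u}) ` ({u \<in> V - {p,q,r}. {p,q,u} \<in> E} \<union> {r})"
  proof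
    fix f assume f: "f \<in> {f \<in> E. p \<in> f \<and> q \<in> f}"
    hence "card f = 3" "f \<subseteq> V" using tg by (auto simp: three_graph_def)
    then obtain u where u: "f = {p,q,u}" "u \<notin> {p,q}" using edge_pair[of f p q] f dist by auto
    show "f \<in> (\<lambda>u. {p,q,u}) ` ({u \<in> V - {p,q,r}. {p,q,u} \<in> E} \<union> {r})"
    proof (cases "u = r")
      case True thus ?thesis using u by auto
    next
      case False thus ?thesis using u f \<open>f \<subseteq> V\<close> by auto
    qed
  qed
  have "card {f \<in> E. p \<in> f \<and> q \<in> f} \<le> card ((\<lambda>u. {p,q,u}) ` ({u \<in> V - {p,q,r}. {p,q,u} \<in> E} \<union> {r}))"
    using fV sb by (intro card_mono) auto
  also have "\<dots> \<le> card ({u \<in> V - {p,q,r}. {p,q,u} \<in> E} \<union> {r})" by (rule card_image_le) (use fV in auto)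
  also have "\<dots> \<le> card {u \<in> V - {p,q,r}. {p,q,u} \<in> E} + 1"
    using card_Un_le[of "{u \<in> V - {p,q,r}. {p,q,u} \<in> E}" "{r}"] by simp
  finally show ?thesis using cd unfolding codeg_def by linarith
qed

lemma L_big:
  assumes tg: "three_graph V E" and cV: "card V = n" and md: "min_codeg_ge V E d" and e: "e \<in> E"
  shows "real (card (Lset V E e)) \<ge> (3*(d-1) - (real n - 3))/2"
proof -
  have fV: "finite V" using tg by (auto simp: three_graph_def)
  have fE: "finite E" using finE[OF tg] .
  have "card e = 3" "e \<subseteq> V" using tg e by (auto simp: three_graph_def)
  then obtain a b c where abc: "e = {a,b,c}" "a \<noteq> b" "b \<noteq> c" "a \<noteq> c" by (auto simp: card_3_iff)
  define B where "B = V - e"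
  have fB: "finite B" using fV B_def by auto
  have cB: "real (card B) = real n - 3"
  proof -
    have fe: "finite e" using \<open>e \<subseteq> V\<close> fV finite_subset by blast
    have "card (V - e) = card V - card e" using card_Diff_subset[OF fe \<open>e \<subseteq> V\<close>] .
    moreover have "card e \<le> card V" using card_mono[OF fV \<open>e \<subseteq> V\<close>] .
    ultimately show ?thesis using \<open>card e = 3\<close> cV unfolding B_def by (simp add: of_nat_diff)
  qed
  have LB: "Lset V E e \<subseteq> B"
  proof
    fix u assume "u \<in> Lset V E e"
    thus "u \<in> B" using K4_of_L[of e u V E] \<open>card e = 3\<close> unfolding B_def
      by (metis DiffI card.infinite zero_neq_numeral)
  qed
  define g where "g = (\<lambda>u. (of_bool ({a,b,u} \<in> E) + of_bool ({a,c,u} \<in> E) + of_bool ({b,c,u} \<in> E) :: real))"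
  have s1: "(\<Sum>u\<in>B. of_bool ({a,b,u} \<in> E) :: real) \<ge> d - 1"
    using pair_count[OF tg md, of a b c] abc e fB unfolding B_def
    by (simp add: Int_def)
  have s2: "(\<Sum>u\<in>B. of_bool ({a,c,u} \<in> E) :: real) \<ge> d - 1"
    using pair_count[OF tg md, of a c b] abc e fB unfolding B_def
    by (simp add: Int_def insert_commute)
  have s3: "(\<Sum>u\<in>B. of_bool ({b,c,u} \<in> E) :: real) \<ge> d - 1"
    using pair_count[OF tg md, of b c a] abc e fB unfolding B_def
    by (simp add: Int_def insert_commute)
  have "(\<Sum>u\<in>B. g u) \<ge> 3 * (d - 1)" using s1 s2 s3 unfolding g_def by (simp add: sum.distrib)
  moreover have "\<forall>u\<in>B. g u \<le> 1 + 2 * of_bool (u \<in> Lset V E e)"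
  proof
    fix u assume u: "u \<in> B"
    show "g u \<le> 1 + 2 * of_bool (u \<in> Lset V E e)"
    proof (cases "u \<in> Lset V E e")
      case True thus ?thesis unfolding g_def by simp
    next
      case False
      have "distinct [a,b,c,u]" using u abc unfolding B_def by auto
      hence "\<not> (({a,b,u} \<in> E \<and> {a,c,u} \<in> E) \<or> ({a,b,u} \<in> E \<and> {b,c,u} \<in> E) \<or> ({a,c,u} \<in> E \<and> {b,c,u} \<in> E))"
        using L_intro[of a b c E u V] False abc e u fE unfolding B_def by auto
      thus ?thesis using False unfolding g_def by auto
    qed
  qed
  hence "(\<Sum>u\<in>B. g u) \<le> (\<Sum>u\<in>B. 1 + 2 * of_bool (u \<in> Lset V E e))" by (intro sum_mono) auto
  also have "\<dots> = real (card B) + 2 * real (card (Lset V E e))"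
  proof -
    have "{x \<in> B. x \<in> Lset V E e} = Lset V E e" using LB by auto
    thus ?thesis using fB by (simp add: sum.distrib sum_distrib_left[symmetric] Int_def)
  qed
  finally show ?thesis using cB by (simp add: field_simps)
qed

theorem proposition5p7:
  fixes V :: "'a set" and E :: "'a set set" and n :: nat and \<epsilon> \<gamma> :: real and v :: 'a
  assumes "three_graph V E"
    and "card V = n"
    and "0 < \<epsilon>" and "\<epsilon> < 1" and "0 < \<gamma>" and "\<gamma> < 1"
    and "min_codeg_ge V E ((1/2 - \<gamma>) * real n)"
    and "v \<in> V"
    and "real (card {e \<in> E. v \<in> Lset V E e}) \<ge> \<epsilon> * real n ^ 3"
  shows "real (card (close_nbhd V E 1 (\<gamma> * \<epsilon>) v)) \<ge> (1/4 - 3 * \<gamma>) * real n"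
proof -
  note tg = assms(1)
  have fV: "finite V" using tg by (auto simp: three_graph_def)
  have fE: "finite E" using finE[OF tg] .
  define A where "A = {e \<in> E. v \<in> Lset V E e}"
  define N where "N = close_nbhd V E 1 (\<gamma> * \<epsilon>) v"
  define M where "M = real (card A)"
  have fA: "finite A" using fE A_def by auto
  have npos: "real n > 0" using assms(2,8) fV card_gt_0_iff by fastforce
  have Mge: "M \<ge> \<epsilon> * real n ^ 3" using assms(9) unfolding M_def A_def .
  have Mpos: "M > 0" using Mge npos assms(3) by (smt (verit) mult_pos_pos zero_less_power)
  have NV: "N \<subseteq> V" unfolding N_def close_nbhd_def by auto
  have LV: "\<And>e. Lset V E e \<subseteq> V" unfolding Lset_def by auto
  have e3: "\<And>e. e \<in> E \<Longrightarrow> card e = 3 \<and> e \<subseteq> V \<and> finite e"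
    using tg fV by (auto simp: three_graph_def intro: finite_subset)
  have big: "\<forall>e\<in>A. real (card (Lset V E e)) \<ge> (1/4 - 3*\<gamma>/2) * real n"
  proof
    fix e assume "e \<in> A"
    hence "e \<in> E" unfolding A_def by auto
    from L_big[OF tg assms(2) assms(7) this]
    show "real (card (Lset V E e)) \<ge> (1/4 - 3*\<gamma>/2) * real n" by (simp add: field_simps)
  qed
  define G where "G = (\<lambda>u. real (card {e \<in> A. u \<in> Lset V E e}))"
  have swap: "(\<Sum>e\<in>A. real (card (Lset V E e))) = (\<Sum>u\<in>V. G u)"
  proof -
    have "(\<Sum>e\<in>A. real (card (Lset V E e))) = (\<Sum>e\<in>A. \<Sum>u\<in>V. (of_bool (u \<in> Lset V E e) :: real))"
    proof (rule sum.cong[OF refl])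
      fix e assume "e \<in> A"
      have "V \<inter> {u. u \<in> Lset V E e} = Lset V E e" using LV by auto
      thus "real (card (Lset V E e)) = (\<Sum>u\<in>V. (of_bool (u \<in> Lset V E e) :: real))" using fV by simp
    qed
    also have "\<dots> = (\<Sum>u\<in>V. \<Sum>e\<in>A. (of_bool (u \<in> Lset V E e) :: real))" by (rule sum.swap)
    also have "\<dots> = (\<Sum>u\<in>V. G u)" unfolding G_def using fA by (simp add: Int_def)
    finally show ?thesis .
  qed
  have lower: "(\<Sum>u\<in>V. G u) \<ge> M * ((1/4 - 3*\<gamma>/2) * real n)"
  proof -
    have "(\<Sum>e\<in>A. (1/4 - 3*\<gamma>/2) * real n) \<le> (\<Sum>e\<in>A. real (card (Lset V E e)))"
      using big by (intro sum_mono) auto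
    thus ?thesis using swap unfolding M_def by simp
  qed
  have Gb: "\<forall>u\<in>V. G u \<le> M * of_bool (u \<in> N) + \<gamma> * M"
  proof
    fix u assume uV: "u \<in> V"
    have GM: "G u \<le> M" unfolding G_def M_def using fA by (simp add: card_mono)
    show "G u \<le> M * of_bool (u \<in> N) + \<gamma> * M"
    proof (cases "u \<in> N")
      case True thus ?thesis using GM Mpos assms(5) by (simp add: add_increasing2)
    next
      case False
      have sub: "{e \<in> A. u \<in> Lset V E e} \<subseteq> {S. connector V E 1 v u S}"
      proof
        fix e assume "e \<in> {e \<in> A. u \<in> Lset V E e}"
        hence eA: "e \<in> E" "v \<in> Lset V E e" "u \<in> Lset V E e" unfolding A_def by auto
        have c: "card e = 3" "e \<subseteq> V" "finite e" using e3[OF eA(1)] by auto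
        show "e \<in> {S. connector V E 1 v u S}"
          using K4_of_L[OF c(3) c(1) eA(2)] K4_of_L[OF c(3) c(1) eA(3)] c factor_single
          unfolding connector_def by auto
      qed
      have fC: "finite {S. connector V E 1 v u S}"
        by (rule finite_subset[of _ "Pow V"]) (auto simp: connector_def fV)
      have "G u \<le> real (card {S. connector V E 1 v u S})"
        unfolding G_def using card_mono[OF fC sub] by simp
      also have "\<dots> < \<gamma> * \<epsilon> * real n ^ 3"
        using False uV assms(2) unfolding N_def close_nbhd_def close_def by auto
      also have "\<dots> \<le> \<gamma> * M" using Mge assms(5) by (simp add: mult.assoc)
      finally show ?thesis using False by simp
    qed
  qed
  have "(\<Sum>u\<in>V. G u) \<le> (\<Sum>u\<in>V. M * of_bool (u \<in> N) + \<gamma> * M)"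
    using Gb by (intro sum_mono) auto
  also have "\<dots> = M * real (card N) + real n * (\<gamma> * M)"
  proof -
    have "V \<inter> {u. u \<in> N} = N" using NV by auto
    thus ?thesis using fV assms(2) by (simp add: sum.distrib sum_distrib_left[symmetric])
  qed
  finally have "M * ((1/4 - 3*\<gamma>/2) * real n) \<le> M * (real (card N) + real n * \<gamma>)"
    using lower by (simp add: algebra_simps)
  hence "(1/4 - 3*\<gamma>/2) * real n \<le> real (card N) + real n * \<gamma>"
    using Mpos by (simp add: mult_le_cancel_left_pos)
  hence "real (card N) \<ge> (1/4 - 3*\<gamma>/2) * real n - real n * \<gamma>" by linarith
  moreover have "(1/4 - 3*\<gamma>/2) * real n - real n * \<gamma> \<ge> (1/4 - 3 * \<gamma>) * real n"
    using npos assms(5) by (simp add: algebra_simps)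
  ultimately show ?thesis unfolding N_def by linarith
qed

end
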